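(* Consider counterexamples of the following form: $G$ is a planar graph containing no $3$-cycle, $4$-cycle and $5$-cycle that are pairwise adjacent, $C_0$ is a $3$-cycle of $G$, $s\ge1$, $H$ is a cover of $G$ with respect to $L(v)=\{1,\dots,s\}$ for all $v$, $F=(f_1,\dots,f_s)$ with $f_i(v)\in\{0,1,2\}$ and $f_1(v)+\cdots+f_s(v)\ge4$ for all $v$, and $R_0$ is a DP-$F$-coloring of $C_0$ (with respect to the restriction of $H$ to the vertices over $V(C_0)$) that cannot be extended to a DP-$F$-coloring of $(G,H)$. If such a counterexample has $|V(G)|$ minimum, then every vertex of $G$ not on $C_0$ has degree at least $4$.
   Context: Two cycles are adjacent if they share an edge. A cover $H$ of $G$ w.r.t. $L$ has vertex set $\{(u,c):c\in L(u)\}$, each $\{u\}\times L(u)$ is a clique, for each edge $uv$ the edges between $\{u\}\times L(u)$ and $\{v\}\times L(v)$ form a matching, and there are no such edges for non-adjacent $u,v$. A representative set contains exactly one vertex of each $\{v\}\times L(v)$. A DP-$F$-coloring is a representative set $R$ admitting an ordering in which each $(v,i)\in R$ has fewer than $f_i(v)$ $H$-neighbors among earlier elements of $R$; extending $R_0$ means finding a DP-$F$-coloring of $(G,H)$ containing $R_0$. *)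

theory Defs
  imports "HOL-Analysis.Analysis"
begin

definition simple_graph :: "'a set \<Rightarrow> ('a \<Rightarrow> 'a \<Rightarrow> bool) \<Rightarrow> bool" where
  "simple_graph V E \<longleftrightarrow> finite V \<and> (\<forall>u v. E u v \<longrightarrow> u \<in> V \<and> v \<in> V \<and> u \<noteq> v \<and> E v u)"

definition degree :: "'a set \<Rightarrow> ('a \<Rightarrow> 'a \<Rightarrow> bool) \<Rightarrow> 'a \<Rightarrow> nat" where
  "degree V E v = card {u \<in> V. E v u}"

definition planar :: "'a set \<Rightarrow> ('a \<Rightarrow> 'a \<Rightarrow> bool) \<Rightarrow> bool" where
  "planar V E \<longleftrightarrow> (\<exists>(p :: 'a \<Rightarrow> complex) (\<gamma> :: 'a set \<Rightarrow> real \<Rightarrow> complex).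
     inj_on p V \<and>
     (\<forall>u v. E u v \<longrightarrow> arc (\<gamma> {u, v}) \<and> {pathstart (\<gamma> {u,v}), pathfinish (\<gamma> {u,v})} = {p u, p v}
         \<and> path_image (\<gamma> {u, v}) \<inter> p ` V = {p u, p v}) \<and>
     (\<forall>u v x y. E u v \<longrightarrow> E x y \<longrightarrow> {u, v} \<noteq> {x, y} \<longrightarrow>
         path_image (\<gamma> {u, v}) \<inter> path_image (\<gamma> {x, y}) \<subseteq> p ` ({u, v} \<inter> {x, y})))"

definition is_cycle :: "('a \<Rightarrow> 'a \<Rightarrow> bool) \<Rightarrow> nat \<Rightarrow> 'a list \<Rightarrow> bool" where
  "is_cycle E k xs \<longleftrightarrow> k \<ge> 3 \<and> length xs = k \<and> distinct xs \<and>
     (\<forall>i < k. E (xs ! i) (xs ! ((i + 1) mod k)))"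

definition cycle_edges :: "'a list \<Rightarrow> 'a set set" where
  "cycle_edges xs = {{xs ! i, xs ! ((i + 1) mod length xs)} | i. i < length xs}"

definition adjacent_cycles :: "'a list \<Rightarrow> 'a list \<Rightarrow> bool" where
  "adjacent_cycles xs ys \<longleftrightarrow> cycle_edges xs \<inter> cycle_edges ys \<noteq> {}"

definition no_adjacent_345 :: "('a \<Rightarrow> 'a \<Rightarrow> bool) \<Rightarrow> bool" where
  "no_adjacent_345 E \<longleftrightarrow> \<not> (\<exists>c3 c4 c5. is_cycle E 3 c3 \<and> is_cycle E 4 c4 \<and> is_cycle E 5 c5 \<and>
       adjacent_cycles c3 c4 \<and> adjacent_cycles c3 c5 \<and> adjacent_cycles c4 c5)"

definition is_cover :: "'a set \<Rightarrow> ('a \<Rightarrow> 'a \<Rightarrow> bool) \<Rightarrow> nat \<Rightarrow>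
    ('a \<times> nat \<Rightarrow> 'a \<times> nat \<Rightarrow> bool) \<Rightarrow> bool" where
  "is_cover V E s HE \<longleftrightarrow>
     (\<forall>x y. HE x y \<longrightarrow> x \<in> V \<times> {1..s} \<and> y \<in> V \<times> {1..s} \<and> x \<noteq> y \<and> HE y x) \<and>
     (\<forall>u \<in> V. \<forall>c \<in> {1..s}. \<forall>d \<in> {1..s}. c \<noteq> d \<longrightarrow> HE (u, c) (u, d)) \<and>
     (\<forall>u v c d d'. u \<noteq> v \<longrightarrow> HE (u, c) (v, d) \<longrightarrow> HE (u, c) (v, d') \<longrightarrow> d = d') \<and>
     (\<forall>u v c d. u \<noteq> v \<longrightarrow> HE (u, c) (v, d) \<longrightarrow> E u v)"

definition representative :: "'a set \<Rightarrow> nat \<Rightarrow> ('a \<times> nat) set \<Rightarrow> bool" where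
  "representative W s R \<longleftrightarrow> R \<subseteq> W \<times> {1..s} \<and> (\<forall>v \<in> W. \<exists>!c. (v, c) \<in> R)"

text \<open>DP-F-coloring (over the vertices W, w.r.t. the cover edges HE; F given by f i v = f_i(v)).\<close>
definition dp_F_coloring :: "('a \<times> nat \<Rightarrow> 'a \<times> nat \<Rightarrow> bool) \<Rightarrow> nat \<Rightarrow> (nat \<Rightarrow> 'a \<Rightarrow> nat) \<Rightarrow>
    'a set \<Rightarrow> ('a \<times> nat) set \<Rightarrow> bool" where
  "dp_F_coloring HE s f W R \<longleftrightarrow> representative W s R \<and>
     (\<exists>xs. distinct xs \<and> set xs = R \<and>
        (\<forall>j < length xs. card {k. k < j \<and> HE (xs ! k) (xs ! j)} < f (snd (xs ! j)) (fst (xs ! j))))"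

definition restrict_cover :: "('a \<times> nat \<Rightarrow> 'a \<times> nat \<Rightarrow> bool) \<Rightarrow> 'a set \<Rightarrow>
    ('a \<times> nat \<Rightarrow> 'a \<times> nat \<Rightarrow> bool)" where
  "restrict_cover HE W = (\<lambda>x y. HE x y \<and> fst x \<in> W \<and> fst y \<in> W)"

definition counterexample :: "'a set \<Rightarrow> ('a \<Rightarrow> 'a \<Rightarrow> bool) \<Rightarrow> 'a list \<Rightarrow> nat \<Rightarrow>
    ('a \<times> nat \<Rightarrow> 'a \<times> nat \<Rightarrow> bool) \<Rightarrow> (nat \<Rightarrow> 'a \<Rightarrow> nat) \<Rightarrow> ('a \<times> nat) set \<Rightarrow> bool" where
  "counterexample V E C0 s HE f R0 \<longleftrightarrow>
     simple_graph V E \<and> planar V E \<and> no_adjacent_345 E \<and>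
     is_cycle E 3 C0 \<and> s \<ge> 1 \<and> is_cover V E s HE \<and>
     (\<forall>v \<in> V. (\<forall>i \<in> {1..s}. f i v \<in> {0, 1, 2}) \<and> (\<Sum>i = 1..s. f i v) \<ge> 4) \<and>
     dp_F_coloring (restrict_cover HE (set C0)) s f (set C0) R0 \<and>
     \<not> (\<exists>R. dp_F_coloring HE s f V R \<and> R0 \<subseteq> R)"

end

theory Submission
  imports Defs
begin

lemma cycle_mono: "is_cycle E' k c \<Longrightarrow> (\<And>u w. E' u w \<Longrightarrow> E u w) \<Longrightarrow> is_cycle E k c"
  by (auto simp: is_cycle_def)

lemma no345_mono: "no_adjacent_345 E \<Longrightarrow> (\<And>u w. E' u w \<Longrightarrow> E u w) \<Longrightarrow> no_adjacent_345 E'"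
proof -
  assume a: "no_adjacent_345 E" and m: "\<And>u w. E' u w \<Longrightarrow> E u w"
  have "\<And>k c. is_cycle E' k c \<Longrightarrow> is_cycle E k c" using cycle_mono m by blast
  then show ?thesis using a unfolding no_adjacent_345_def by blast
qed

lemma planar_sub:
  assumes "planar V E" "V' \<subseteq> V" "\<And>u w. E' u w \<Longrightarrow> E u w \<and> u \<in> V' \<and> w \<in> V'"
  shows "planar V' E'"
proof -
  obtain p :: "'a \<Rightarrow> complex" and \<gamma> where
    p: "inj_on p V"
    and e: "\<forall>u v. E u v \<longrightarrow> arc (\<gamma> {u, v}) \<and> {pathstart (\<gamma> {u,v}), pathfinish (\<gamma> {u,v})} = {p u, p v}
         \<and> path_image (\<gamma> {u, v}) \<inter> p ` V = {p u, p v}"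
    and x: "\<forall>u v x y. E u v \<longrightarrow> E x y \<longrightarrow> {u, v} \<noteq> {x, y} \<longrightarrow>
         path_image (\<gamma> {u, v}) \<inter> path_image (\<gamma> {x, y}) \<subseteq> p ` ({u, v} \<inter> {x, y})"
    using assms(1) unfolding planar_def apply (elim exE conjE) apply (rule that) by assumption+
  have "inj_on p V'" using p assms(2) by (rule inj_on_subset)
  moreover have "\<forall>u v. E' u v \<longrightarrow> arc (\<gamma> {u, v}) \<and> {pathstart (\<gamma> {u,v}), pathfinish (\<gamma> {u,v})} = {p u, p v}
         \<and> path_image (\<gamma> {u, v}) \<inter> p ` V' = {p u, p v}"
  proof (intro allI impI)
    fix u v assume uv: "E' u v"
    then have E: "E u v" "u \<in> V'" "v \<in> V'" using assms(3) by auto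
    note eu = e[rule_format, OF E(1)]
    have I: "path_image (\<gamma> {u, v}) \<inter> p ` V = {p u, p v}" using eu by (rule conjunct2[OF conjunct2])
    have "p ` V' \<subseteq> p ` V" using assms(2) by (rule image_mono)
    then have "path_image (\<gamma> {u, v}) \<inter> p ` V' \<subseteq> {p u, p v}" using I by blast
    moreover have "{p u, p v} \<subseteq> path_image (\<gamma> {u, v}) \<inter> p ` V'" using I E(2,3) by blast
    ultimately have "path_image (\<gamma> {u, v}) \<inter> p ` V' = {p u, p v}" by (rule antisym)
    then show "arc (\<gamma> {u, v}) \<and> {pathstart (\<gamma> {u,v}), pathfinish (\<gamma> {u,v})} = {p u, p v}
         \<and> path_image (\<gamma> {u, v}) \<inter> p ` V' = {p u, p v}" using eu by simp
  qed
  moreover have "\<forall>u v x y. E' u v \<longrightarrow> E' x y \<longrightarrow> {u, v} \<noteq> {x, y} \<longrightarrow>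
         path_image (\<gamma> {u, v}) \<inter> path_image (\<gamma> {x, y}) \<subseteq> p ` ({u, v} \<inter> {x, y})"
  proof (intro allI impI)
    fix u v a b assume "E' u v" "E' a b" "{u, v} \<noteq> {a, b}"
    then show "path_image (\<gamma> {u, v}) \<inter> path_image (\<gamma> {a, b}) \<subseteq> p ` ({u, v} \<inter> {a, b})"
      using x assms(3) by metis
  qed
  ultimately show ?thesis unfolding planar_def
    apply -
    apply (rule exI[where x=p], rule exI[where x=\<gamma>])
    apply (intro conjI)
    by assumption+
qed

lemma extend:
  assumes cov: "is_cover V E s HE" and sg: "simple_graph V E" and vV: "v \<in> V"
    and deg: "degree V E v \<le> 3" and fsum: "(\<Sum>i=1..s. f i v) \<ge> 4"
    and col: "dp_F_coloring (restrict_cover HE (V - {v})) s f (V - {v}) R'"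
  shows "\<exists>c\<in>{1..s}. dp_F_coloring HE s f V (insert (v,c) R')"
proof -
  from col obtain xs where rep: "representative (V-{v}) s R'" and dxs: "distinct xs" "set xs = R'"
    and ord: "\<forall>j<length xs. card {k. k<j \<and> restrict_cover HE (V-{v}) (xs!k) (xs!j)} < f (snd (xs!j)) (fst (xs!j))"
    unfolding dp_F_coloring_def by blast
  define n where "n = length xs"
  define N where "N c = {k. k<n \<and> HE (xs!k) (v,c)}" for c
  have R'sub: "R' \<subseteq> (V-{v}) \<times> {1..s}" using rep unfolding representative_def by blast
  have fstin: "fst (xs!k) \<in> V - {v}" if "k<n" for k
    using R'sub dxs(2) that n_def nth_mem by fastforce
  have disj: "N c \<inter> N d = {}" if "c \<noteq> d" for c d
  proof (rule ccontr)
    assume "N c \<inter> N d \<noteq> {}"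
    then obtain k where k: "k < n" "HE (xs!k) (v,c)" "HE (xs!k) (v,d)" unfolding N_def by blast
    obtain u e where ue: "xs!k = (u,e)" by fastforce
    have "u \<noteq> v" using fstin[OF k(1)] ue by auto
    then have "c = d" using cov k ue unfolding is_cover_def by metis
    then show False using that by simp
  qed
  have sub: "(\<Union>c\<in>{1..s}. N c) \<subseteq> {k. k<n \<and> fst (xs!k) \<in> {u\<in>V. E v u}}"
  proof
    fix k assume "k \<in> (\<Union>c\<in>{1..s}. N c)"
    then obtain c where k: "k < n" "HE (xs!k) (v,c)" unfolding N_def by blast
    obtain u e where ue: "xs!k = (u,e)" by fastforce
    have "u \<noteq> v" using fstin[OF k(1)] ue by auto
    then have "E u v" using cov k ue unfolding is_cover_def by metis
    then have "E v u" "u \<in> V" using sg unfolding simple_graph_def by auto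
    then show "k \<in> {k. k<n \<and> fst (xs!k) \<in> {u\<in>V. E v u}}" using k ue by auto
  qed
  have inj: "inj_on (\<lambda>k. fst (xs!k)) {k. k<n}"
  proof
    fix k1 k2 assume k: "k1 \<in> {k. k<n}" "k2 \<in> {k. k<n}" "fst (xs!k1) = fst (xs!k2)"
    obtain u c1 where 1: "xs!k1 = (u,c1)" by fastforce
    obtain c2 where 2: "xs!k2 = (u,c2)" using k(3) 1 by (metis fst_conv prod.collapse)
    have in1: "(u,c1) \<in> R'" "(u,c2) \<in> R'" using 1 2 k dxs(2) n_def nth_mem by (metis mem_Collect_eq)+
    have "u \<in> V - {v}" using in1 R'sub by auto
    then have "c1 = c2" using rep in1 unfolding representative_def by metis
    then have "xs!k1 = xs!k2" using 1 2 by simp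
    then show "k1 = k2" using dxs(1) k n_def by (simp add: nth_eq_iff_index_eq)
  qed
  have finV: "finite V" using sg unfolding simple_graph_def by simp
  have "card (\<Union>c\<in>{1..s}. N c) \<le> card {k. k<n \<and> fst (xs!k) \<in> {u\<in>V. E v u}}"
    by (rule card_mono[OF _ sub]) simp
  also have "\<dots> \<le> card {u\<in>V. E v u}"
    by (rule card_inj_on_le[where f="\<lambda>k. fst (xs!k)"]) (use inj finV in \<open>auto intro: inj_on_subset\<close>)
  also have "\<dots> \<le> 3" using deg unfolding degree_def .
  finally have cardU: "card (\<Union>c\<in>{1..s}. N c) \<le> 3" .
  have finN: "finite (N c)" for c unfolding N_def by simp
  have sumeq: "(\<Sum>c=1..s. card (N c)) = card (\<Union>c\<in>{1..s}. N c)"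
    by (rule card_UN_disjoint[symmetric]) (use finN disj in auto)
  obtain c where c: "c\<in>{1..s}" "card (N c) < f c v"
  proof (rule ccontr)
    assume "\<not> thesis"
    then have "\<forall>c\<in>{1..s}. f c v \<le> card (N c)" using that by (meson not_le)
    then have "(\<Sum>i=1..s. f i v) \<le> (\<Sum>c=1..s. card (N c))" by (intro sum_mono) auto
    then show False using sumeq cardU fsum by linarith
  qed
  define ys where "ys = xs @ [(v,c)]"
  have notin: "(v,c) \<notin> set xs" using R'sub dxs(2) by auto
  have "representative V s (insert (v,c) R')"
    unfolding representative_def
  proof
    show "insert (v, c) R' \<subseteq> V \<times> {1..s}" using R'sub vV c(1) by auto
    show "\<forall>w\<in>V. \<exists>!c'. (w, c') \<in> insert (v, c) R'"
    proof
      fix w assume w: "w \<in> V"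
      show "\<exists>!c'. (w, c') \<in> insert (v, c) R'"
      proof (cases "w = v")
        case True
        then show ?thesis using R'sub by auto
      next
        case False
        then have "\<exists>!c'. (w, c') \<in> R'" using rep w unfolding representative_def by blast
        then show ?thesis using False by auto
      qed
    qed
  qed
  moreover have "distinct ys" using dxs(1) notin ys_def by simp
  moreover have "set ys = insert (v,c) R'" using dxs(2) ys_def by auto
  moreover have "\<forall>j < length ys. card {k. k < j \<and> HE (ys ! k) (ys ! j)} < f (snd (ys ! j)) (fst (ys ! j))"
  proof (intro allI impI)
    fix j assume "j < length ys"
    then have "j < n \<or> j = n" using ys_def n_def by auto
    then show "card {k. k < j \<and> HE (ys ! k) (ys ! j)} < f (snd (ys ! j)) (fst (ys ! j))"
    proof
      assume j: "j < n"
      have "{k. k < j \<and> HE (ys ! k) (ys ! j)} = {k. k<j \<and> restrict_cover HE (V-{v}) (xs!k) (xs!j)}"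
        using j fstin unfolding ys_def restrict_cover_def n_def by (auto simp: nth_append)
      then show ?thesis using ord j n_def ys_def by (simp add: nth_append)
    next
      assume j: "j = n"
      have "{k. k < j \<and> HE (ys ! k) (ys ! j)} = N c"
        using j unfolding ys_def N_def n_def by (auto simp: nth_append)
      then show ?thesis using c j ys_def n_def by simp
    qed
  qed
  ultimately show ?thesis using c(1) unfolding dp_F_coloring_def by blast
qed

theorem lemma4:
  fixes V :: "'a set" and E :: "'a \<Rightarrow> 'a \<Rightarrow> bool" and C0 :: "'a list" and s :: nat
    and HE :: "'a \<times> nat \<Rightarrow> 'a \<times> nat \<Rightarrow> bool" and f :: "nat \<Rightarrow> 'a \<Rightarrow> nat"
    and R0 :: "('a \<times> nat) set"
  assumes ce: "counterexample V E C0 s HE f R0"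
    and minimal: "\<And>V' E' C0' s' HE' f' R0'. counterexample (V' :: 'a set) E' C0' s' HE' f' R0' \<Longrightarrow> card V \<le> card V'"
  shows "\<forall>v \<in> V - set C0. degree V E v \<ge> 4"
proof (rule ccontr)
  assume "\<not> ?thesis"
  then obtain v where v: "v \<in> V" "v \<notin> set C0" and deg: "degree V E v \<le> 3" by force
  define V' where "V' = V - {v}"
  define E' where "E' = (\<lambda>a b. E a b \<and> a \<noteq> v \<and> b \<noteq> v)"
  define HE' where "HE' = restrict_cover HE V'"
  have sg: "simple_graph V E" and pl: "planar V E" and n345: "no_adjacent_345 E"
    and cyc: "is_cycle E 3 C0" and s1: "s \<ge> 1" and cov: "is_cover V E s HE"
    and fc: "\<forall>v \<in> V. (\<forall>i \<in> {1..s}. f i v \<in> {0, 1, 2}) \<and> (\<Sum>i = 1..s. f i v) \<ge> 4"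
    and r0: "dp_F_coloring (restrict_cover HE (set C0)) s f (set C0) R0"
    and next0: "\<not> (\<exists>R. dp_F_coloring HE s f V R \<and> R0 \<subseteq> R)"
    using ce unfolding counterexample_def by auto
  have C0V: "set C0 \<subseteq> V"
  proof
    fix x assume "x \<in> set C0"
    then obtain i where i: "i < length C0" "x = C0 ! i" by (metis in_set_conv_nth)
    then have "E x (C0 ! ((i+1) mod 3))" using cyc unfolding is_cycle_def by auto
    then show "x \<in> V" using sg unfolding simple_graph_def by auto
  qed
  have C0V': "set C0 \<subseteq> V'" using C0V v(2) V'_def by auto
  have "counterexample V' E' C0 s HE' f R0"
    unfolding counterexample_def
  proof (intro conjI)
    show "simple_graph V' E'" using sg unfolding simple_graph_def V'_def E'_def by auto
    show "planar V' E'" by (rule planar_sub[OF pl]) (use sg in \<open>auto simp: V'_def E'_def simple_graph_def\<close>)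
    show "no_adjacent_345 E'" by (rule no345_mono[OF n345]) (simp add: E'_def)
    show "is_cycle E' 3 C0" using cyc C0V' unfolding is_cycle_def E'_def V'_def
      by (auto simp del: nth_mem) (metis nth_mem insert_absorb insert_subset v(2) mod_less_divisor zero_less_numeral)+
    show "1 \<le> s" by (rule s1)
    show "is_cover V' E' s HE'" using cov unfolding is_cover_def HE'_def restrict_cover_def V'_def E'_def
      by (auto; metis fst_conv)
    show "\<forall>v\<in>V'. (\<forall>i\<in>{1..s}. f i v \<in> {0, 1, 2}) \<and> 4 \<le> sum (\<lambda>i. f i v) {1..s}"
      using fc V'_def by auto
    have "restrict_cover HE' (set C0) = restrict_cover HE (set C0)"
      using C0V' unfolding HE'_def restrict_cover_def by (auto intro!: ext)
    then show "dp_F_coloring (restrict_cover HE' (set C0)) s f (set C0) R0" using r0 by simp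
    show "\<not> (\<exists>R. dp_F_coloring HE' s f V' R \<and> R0 \<subseteq> R)"
    proof
      assume "\<exists>R. dp_F_coloring HE' s f V' R \<and> R0 \<subseteq> R"
      then obtain R where R: "dp_F_coloring HE' s f V' R" "R0 \<subseteq> R" by blast
      obtain c where "dp_F_coloring HE s f V (insert (v,c) R)"
        using extend[OF cov sg v(1) deg _ R(1)[unfolded HE'_def V'_def]] fc v(1) by auto
      then show False using next0 R(2) by blast
    qed
  qed
  then have "card V \<le> card V'" by (rule minimal)
  moreover have "finite V" using sg unfolding simple_graph_def by simp
  ultimately show False using v(1) V'_def
    by (metis card_Diff1_less leD)
qed

end
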